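(* Let $\mathcal H$ be an infinite-dimensional complex Hilbert space and let $\mathcal C_f(\mathcal H)$ be the set of closed forms in $\mathcal V_f(\mathcal H)$. Then $(\mathcal C_f(\mathcal H);\oplus_{|\mathcal C_f(\mathcal H)},o)$ is a generalized effect algebra.
   Context: Bilinear forms $t$ on $\mathcal H$ are sesquilinear maps $D(t)\times D(t)\to\mathbb C$ on a dense linear subspace $D(t)$ (linear in the first argument); $t$ is positive if $t(x,x)\ge0$ on $D(t)$, bounded if $\sup\{t(x,x)\mid x\in D(t),\|x\|=1\}<\infty$. The sum $t+s$ has domain $D(t)\cap D(s)$. $o$ is the zero form on $\mathcal H$. $\mathcal V_f(\mathcal H)$ is the set of positive bilinear forms with dense domain such that $D(t)=\mathcal H$ whenever $t$ is bounded; $t\oplus s$ is defined iff $t$ or $s$ is bounded or $D(t)=D(s)$, and then $t\oplus s=t+s$. A positive form $t$ is closed if $D(t)$ is a Hilbert space under $(x,y)_t=t(x,y)+(1+m_t)(x,y)$ with $m_t=\inf\{t(x,x)\mid x\in D(t),\|x\|=1\}$. For $Q\subseteq\mathcal V_f(\mathcal H)$, $x\oplus_{|Q}y$ is defined iff $x\oplus y$ is defined and lies in $Q$, and then equals $x\oplus y$. A generalized effect algebra is a structure $(E;\oplus,0)$ with a partial operation that is commutative and associative (when one side is defined), has $x\oplus0=x$, is cancellative, and satisfies $x\oplus y=0\Rightarrow x=y=0$. *)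

theory Defs
  imports "HOL-Analysis.Analysis"
begin

text \<open>HOL-Analysis only provides real inner product spaces, so we introduce complex
  vector spaces, complex inner product spaces (inner product linear in the first
  argument) and complex Hilbert spaces as type classes.\<close>

class complex_vector = real_vector +
  fixes scaleC :: "complex \<Rightarrow> 'a \<Rightarrow> 'a"
  assumes scaleC_add_right: "scaleC a (x + y) = scaleC a x + scaleC a y"
    and scaleC_add_left: "scaleC (a + b) x = scaleC a x + scaleC b x"
    and scaleC_scaleC: "scaleC a (scaleC b x) = scaleC (a * b) x"
    and scaleC_one: "scaleC 1 x = x"
    and scaleR_scaleC: "scaleR r x = scaleC (complex_of_real r) x"

class complex_inner = complex_vector + real_normed_vector +
  fixes cinner :: "'a \<Rightarrow> 'a \<Rightarrow> complex"
  assumes cinner_commute: "cinner x y = cnj (cinner y x)"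
    and cinner_add_left: "cinner (x + y) z = cinner x z + cinner y z"
    and cinner_scaleC_left: "cinner (scaleC r x) y = r * cinner x y"
    and cinner_self_real: "Im (cinner x x) = 0"
    and cinner_self_nonneg: "0 \<le> Re (cinner x x)"
    and cinner_self_eq_zero: "cinner x x = 0 \<longleftrightarrow> x = 0"
    and norm_eq_sqrt_cinner: "norm x = sqrt (Re (cinner x x))"

class chilbert_space = complex_inner + complete_space

definition cspan :: "'a::complex_vector set \<Rightarrow> 'a set" where
  "cspan S = {x. \<exists>F c. finite F \<and> F \<subseteq> S \<and> x = (\<Sum>v\<in>F. scaleC (c v) v)}"

definition infinite_dimensional :: "'a::complex_vector itself \<Rightarrow> bool" where
  "infinite_dimensional _ \<longleftrightarrow> \<not> (\<exists>S::'a set. finite S \<and> cspan S = UNIV)"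

text \<open>To make equality of forms mean "same domain
  and same values on the domain", we require the value function to vanish outside
  the domain (canonical representative).\<close>

type_synonym 'a sform = "'a set \<times> ('a \<Rightarrow> 'a \<Rightarrow> complex)"

definition fdom :: "'a sform \<Rightarrow> 'a set" where "fdom t = fst t"
definition fval :: "'a sform \<Rightarrow> 'a \<Rightarrow> 'a \<Rightarrow> complex" where "fval t = snd t"

definition csubspace :: "'a::complex_vector set \<Rightarrow> bool" where
  "csubspace D \<longleftrightarrow> 0 \<in> D \<and> (\<forall>x\<in>D. \<forall>y\<in>D. x + y \<in> D) \<and> (\<forall>c. \<forall>x\<in>D. scaleC c x \<in> D)"

definition is_form :: "'a::chilbert_space sform \<Rightarrow> bool" where
  "is_form t \<longleftrightarrow> csubspace (fdom t) \<and> closure (fdom t) = UNIV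
    \<and> (\<forall>x y. \<not> (x \<in> fdom t \<and> y \<in> fdom t) \<longrightarrow> fval t x y = 0)
    \<and> (\<forall>x\<in>fdom t. \<forall>y\<in>fdom t. \<forall>z\<in>fdom t.
          fval t (x + y) z = fval t x z + fval t y z
        \<and> fval t z (x + y) = fval t z x + fval t z y)
    \<and> (\<forall>c. \<forall>x\<in>fdom t. \<forall>y\<in>fdom t.
          fval t (scaleC c x) y = c * fval t x y
        \<and> fval t x (scaleC c y) = cnj c * fval t x y)"

definition form_positive :: "'a::chilbert_space sform \<Rightarrow> bool" where
  "form_positive t \<longleftrightarrow> (\<forall>x\<in>fdom t. Im (fval t x x) = 0 \<and> 0 \<le> Re (fval t x x))"

definition form_bounded :: "'a::chilbert_space sform \<Rightarrow> bool" where
  "form_bounded t \<longleftrightarrow> (\<exists>M. \<forall>x\<in>fdom t. norm x = 1 \<longrightarrow> Re (fval t x x) \<le> M)"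

definition form_sum :: "'a::chilbert_space sform \<Rightarrow> 'a sform \<Rightarrow> 'a sform" where
  "form_sum t s = (fdom t \<inter> fdom s,
     (\<lambda>x y. if x \<in> fdom t \<inter> fdom s \<and> y \<in> fdom t \<inter> fdom s
            then fval t x y + fval s x y else 0))"

definition zero_form :: "'a::chilbert_space sform" where
  "zero_form = (UNIV, (\<lambda>x y. 0))"

definition Vf :: "'a::chilbert_space sform set" where
  "Vf = {t. is_form t \<and> form_positive t \<and> (form_bounded t \<longrightarrow> fdom t = UNIV)}"

definition form_oplus :: "'a::chilbert_space sform \<Rightarrow> 'a sform \<Rightarrow> 'a sform option" where
  "form_oplus t s = (if form_bounded t \<or> form_bounded s \<or> fdom t = fdom s
                     then Some (form_sum t s) else None)"

definition restrict_oplus ::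
  "'a::chilbert_space sform set \<Rightarrow> 'a sform \<Rightarrow> 'a sform \<Rightarrow> 'a sform option" where
  "restrict_oplus Q t s = (case form_oplus t s of
       Some r \<Rightarrow> (if r \<in> Q then Some r else None) | None \<Rightarrow> None)"

definition form_m :: "'a::chilbert_space sform \<Rightarrow> real" where
  "form_m t = Inf {Re (fval t x x) | x. x \<in> fdom t \<and> norm x = 1}"

definition form_norm :: "'a::chilbert_space sform \<Rightarrow> 'a \<Rightarrow> real" where
  "form_norm t x = sqrt (Re (fval t x x + complex_of_real (1 + form_m t) * cinner x x))"

definition form_closed :: "'a::chilbert_space sform \<Rightarrow> bool" where
  "form_closed t \<longleftrightarrow>
    (\<forall>X::nat \<Rightarrow> 'a. (\<forall>n. X n \<in> fdom t) \<and>
         (\<forall>e>0. \<exists>N. \<forall>m\<ge>N. \<forall>n\<ge>N. form_norm t (X m - X n) < e)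
       \<longrightarrow> (\<exists>x\<in>fdom t. \<forall>e>0. \<exists>N. \<forall>n\<ge>N. form_norm t (X n - x) < e))"

definition Cf :: "'a::chilbert_space sform set" where
  "Cf = {t \<in> Vf. form_closed t}"

definition generalized_effect_algebra ::
  "'b set \<Rightarrow> ('b \<Rightarrow> 'b \<Rightarrow> 'b option) \<Rightarrow> 'b \<Rightarrow> bool" where
  "generalized_effect_algebra E op z \<longleftrightarrow>
     z \<in> E
   \<and> (\<forall>a\<in>E. \<forall>b\<in>E. \<forall>c. op a b = Some c \<longrightarrow> c \<in> E)
   \<and> (\<forall>a\<in>E. \<forall>b\<in>E. op a b = op b a)
   \<and> (\<forall>a\<in>E. \<forall>b\<in>E. \<forall>c\<in>E.
        Option.bind (op a b) (\<lambda>d. op d c) = Option.bind (op b c) (\<lambda>d. op a d))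
   \<and> (\<forall>a\<in>E. op a z = Some a)
   \<and> (\<forall>a\<in>E. \<forall>b\<in>E. \<forall>c\<in>E. op a b \<noteq> None \<and> op a b = op a c \<longrightarrow> b = c)
   \<and> (\<forall>a\<in>E. \<forall>b\<in>E. op a b = Some z \<longrightarrow> a = z \<and> b = z)"

end

theory Submission
  imports Defs
begin


lemma fdom_pair[simp]: "fdom (A, f) = A" by (simp add: fdom_def)
lemma fval_pair[simp]: "fval (A, f) = f" by (simp add: fval_def)

lemma form_eqI: "fdom t = fdom s \<Longrightarrow> fval t = fval s \<Longrightarrow> t = s"
  by (simp add: fdom_def fval_def prod_eq_iff)

lemma fdom_sum[simp]: "fdom (form_sum t s) = fdom t \<inter> fdom s"
  by (simp add: form_sum_def)
lemma fval_sum: "fval (form_sum t s) x y = (if x \<in> fdom t \<inter> fdom s \<and> y \<in> fdom t \<inter> fdom s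
            then fval t x y + fval s x y else 0)"
  by (simp add: form_sum_def)

lemma cinner_self_norm: "cinner x x = complex_of_real ((norm x)^2)"
proof -
  have "(norm x)^2 = Re (cinner x x)" using norm_eq_sqrt_cinner[of x] cinner_self_nonneg[of x] by simp
  then show ?thesis using cinner_self_real[of x] by (simp add: complex_eq_iff)
qed

lemma scaleC_m1: "scaleC (-1) x = - (x::'a::complex_vector)"
  using scaleR_scaleC[of "-1" x] by simp

lemma csub_diff: "csubspace D \<Longrightarrow> x \<in> D \<Longrightarrow> y \<in> D \<Longrightarrow> x - y \<in> D"
  unfolding csubspace_def by (metis scaleC_m1 diff_conv_add_uminus)

lemma nontriv: assumes "infinite_dimensional TYPE('a::chilbert_space)"
  shows "\<exists>x::'a. x \<noteq> 0"
proof (rule ccontr)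
  assume "\<not> ?thesis"
  then have "cspan ({}::'a set) = UNIV" unfolding cspan_def by auto
  then show False using assms unfolding infinite_dimensional_def by blast
qed

lemma VfD: assumes "t \<in> Vf"
  shows "csubspace (fdom t)" "closure (fdom t) = UNIV"
   "\<And>x y. \<not> (x \<in> fdom t \<and> y \<in> fdom t) \<Longrightarrow> fval t x y = 0"
   "form_bounded t \<Longrightarrow> fdom t = UNIV"
   "\<And>x. x \<in> fdom t \<Longrightarrow> Im (fval t x x) = 0"
   "\<And>x. x \<in> fdom t \<Longrightarrow> 0 \<le> Re (fval t x x)"
  using assms unfolding Vf_def is_form_def form_positive_def by auto

lemma VfD_lin: assumes "t \<in> Vf" "x \<in> fdom t" "y \<in> fdom t" "z \<in> fdom t"
  shows "fval t (x + y) z = fval t x z + fval t y z"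
        "fval t z (x + y) = fval t z x + fval t z y"
        "fval t (scaleC c x) y = c * fval t x y"
        "fval t x (scaleC c y) = cnj c * fval t x y"
  using assms unfolding Vf_def is_form_def by auto

lemma Vf_Re_nonneg: "t \<in> Vf \<Longrightarrow> 0 \<le> Re (fval t v v)"
  by (cases "v \<in> fdom t") (simp_all add: VfD(3,6))

lemma Vf_Im: "t \<in> Vf \<Longrightarrow> Im (fval t v v) = 0"
  by (cases "v \<in> fdom t") (simp_all add: VfD(3,5))

lemma unit_in_dom: assumes NT: "\<exists>x::'a::chilbert_space. x \<noteq> 0" and t: "t \<in> Vf"
  shows "\<exists>x\<in>fdom (t::'a sform). norm x = 1"
proof -
  obtain x::'a where x: "x \<noteq> 0" using NT by blast
  have "\<exists>y\<in>fdom t. y \<noteq> 0"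
  proof (rule ccontr)
    assume "\<not> ?thesis"
    then have "fdom t \<subseteq> {0}" by auto
    then have "closure (fdom t) \<subseteq> closure {0}" by (rule closure_mono)
    then show False using x VfD(2)[OF t] by auto
  qed
  then obtain y where y: "y \<in> fdom t" "y \<noteq> 0" by blast
  define u where "u = scaleR (1 / norm y) y"
  have "u = scaleC (complex_of_real (1 / norm y)) y" unfolding u_def by (rule scaleR_scaleC)
  then have "u \<in> fdom t" using y VfD(1)[OF t] unfolding csubspace_def by auto
  moreover have "norm u = 1" using y unfolding u_def by simp
  ultimately show ?thesis by blast
qed

lemma form_m_nonneg: assumes NT: "\<exists>x::'a::chilbert_space. x \<noteq> 0" and t: "t \<in> Vf"
  shows "0 \<le> form_m (t::'a sform)"
  unfolding form_m_def
proof (rule cInf_greatest)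
  show "{Re (fval t x x) |x. x \<in> fdom t \<and> norm x = 1} \<noteq> {}" using unit_in_dom[OF NT t] by auto
  show "\<And>x. x \<in> {Re (fval t x x) |x. x \<in> fdom t \<and> norm x = 1} \<Longrightarrow> 0 \<le> x"
    using Vf_Re_nonneg[OF t] by auto
qed

lemma form_norm_eq: "form_norm t v = sqrt (Re (fval t v v) + (1 + form_m t) * (norm v)^2)"
  unfolding form_norm_def cinner_self_norm by simp

lemma form_norm_ge: assumes NT: "\<exists>x::'a::chilbert_space. x \<noteq> 0" and t: "t \<in> Vf"
  shows "norm v \<le> form_norm (t::'a sform) v"
proof -
  have "(norm v)^2 \<le> Re (fval t v v) + (1 + form_m t) * (norm v)^2"
    using Vf_Re_nonneg[OF t, of v] form_m_nonneg[OF NT t]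
    by (simp add: algebra_simps)
  then have "sqrt ((norm v)^2) \<le> form_norm t v" unfolding form_norm_eq by (rule real_sqrt_le_mono)
  then show ?thesis by simp
qed

lemma polar:
  fixes f :: "'a::complex_vector \<Rightarrow> 'a \<Rightarrow> complex"
  assumes add1: "\<And>x y z. x\<in>D \<Longrightarrow> y\<in>D \<Longrightarrow> z\<in>D \<Longrightarrow> f (x+y) z = f x z + f y z"
    and add2: "\<And>x y z. x\<in>D \<Longrightarrow> y\<in>D \<Longrightarrow> z\<in>D \<Longrightarrow> f z (x+y) = f z x + f z y"
    and sc1: "\<And>c x y. x\<in>D \<Longrightarrow> y\<in>D \<Longrightarrow> f (scaleC c x) y = c * f x y"
    and sc2: "\<And>c x y. x\<in>D \<Longrightarrow> y\<in>D \<Longrightarrow> f x (scaleC c y) = cnj c * f x y"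
    and sub: "csubspace D" and zero: "\<And>u. u\<in>D \<Longrightarrow> f u u = 0" and x: "x\<in>D" and y: "y\<in>D"
  shows "f x y = 0"
proof -
  have iy: "scaleC \<i> y \<in> D" using sub y unfolding csubspace_def by auto
  have xy: "x + y \<in> D" using sub x y unfolding csubspace_def by auto
  have xiy: "x + scaleC \<i> y \<in> D" using sub x iy unfolding csubspace_def by auto
  have "f (x+y) (x+y) = f x x + f x y + (f y x + f y y)"
    using add1[OF x y xy] add2[OF x y x] add2[OF x y y] by simp
  then have e1: "f x y + f y x = 0" using zero[OF xy] zero[OF x] zero[OF y] by simp
  have "f (x + scaleC \<i> y) (x + scaleC \<i> y) = f x x + f x (scaleC \<i> y) + (f (scaleC \<i> y) x + f (scaleC \<i> y) (scaleC \<i> y))"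
    using add1[OF x iy xiy] add2[OF x iy x] add2[OF x iy iy] by simp
  also have "\<dots> = f x x + (- \<i>) * f x y + (\<i> * f y x + f y y)"
    using sc1[OF y x, of \<i>] sc2[OF x y, of \<i>] sc1[OF y iy, of \<i>] sc2[OF y y, of \<i>] by simp
  finally have "(- \<i>) * f x y + \<i> * f y x = 0" using zero[OF xiy] zero[OF x] zero[OF y] by simp
  then have "\<i> * (f y x - f x y) = 0" by (simp add: algebra_simps)
  then have "f y x = f x y" by simp
  with e1 show ?thesis by simp
qed


lemma disc:
  fixes P Q S :: real
  assumes h: "\<And>r. 0 \<le> P + r*S + r^2*Q" and P: "0 \<le> P" and Q: "0 \<le> Q"
  shows "S^2 \<le> 4*P*Q"
proof (cases "Q = 0")
  case True
  have "S = 0"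
  proof (rule ccontr)
    assume S: "S \<noteq> 0"
    have "0 \<le> P + (-(P+1)/S)*S + (-(P+1)/S)^2*Q" by (rule h)
    then show False using S True by simp
  qed
  then show ?thesis using P Q by simp
next
  case False
  then have Qp: "Q > 0" using Q by simp
  have "0 \<le> P + (-S/(2*Q))*S + (-S/(2*Q))^2*Q" by (rule h)
  also have "\<dots> = P - S^2/(4*Q)" using Qp by (simp add: field_simps power2_eq_square)
  finally have "S^2/(4*Q) \<le> P" by simp
  then show ?thesis using Qp by (simp add: field_simps)
qed

lemma scaleC_zero0: "scaleC 0 x = (0::'a::complex_vector)"
  using scaleR_scaleC[of 0 x] by simp

lemma Vf_UNIV_expand: assumes t: "t \<in> Vf" and U: "fdom t = UNIV"
  shows "Re (fval t (u + h) (u + h)) = Re (fval t u u) + Re (fval t u h + fval t h u) + Re (fval t h h)"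
    and "\<And>r::real. Re (fval t (u + scaleR r h) (u + scaleR r h)) = Re (fval t u u) + r * Re (fval t u h + fval t h u) + r^2 * Re (fval t h h)"
proof -
  note L = VfD_lin[OF t, unfolded U, simplified]
  show "Re (fval t (u + h) (u + h)) = Re (fval t u u) + Re (fval t u h + fval t h u) + Re (fval t h h)"
    by (simp add: L)
  fix r :: real
  have "fval t (u + scaleR r h) (u + scaleR r h) = fval t u u + complex_of_real r * (fval t u h + fval t h u) + (complex_of_real r)^2 * fval t h h"
    by (simp add: L scaleR_scaleC algebra_simps power2_eq_square)
  then show "Re (fval t (u + scaleR r h) (u + scaleR r h)) = Re (fval t u u) + r * Re (fval t u h + fval t h u) + r^2 * Re (fval t h h)"
    by (simp add: power2_eq_square)
qed

lemma bounded_quad: assumes NT: "\<exists>x::'a::chilbert_space. x \<noteq> 0" and t: "t \<in> Vf" and B: "form_bounded (t::'a sform)"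
  shows "\<exists>M\<ge>0. \<forall>x. Re (fval t x x) \<le> M * (norm x)^2"
proof -
  have U: "fdom t = UNIV" using VfD(4)[OF t B] .
  note L = VfD_lin[OF t, unfolded U, simplified]
  obtain M where M: "\<And>x. norm x = 1 \<Longrightarrow> Re (fval t x x) \<le> M" using B U unfolding form_bounded_def by auto
  have "\<forall>x. Re (fval t x x) \<le> max M 0 * (norm x)^2"
  proof
    fix x :: 'a
    show "Re (fval t x x) \<le> max M 0 * (norm x)^2"
    proof (cases "x = 0")
      case True
      have "fval t (scaleC 0 0) 0 = 0" by (simp add: L)
      then show ?thesis using True by (simp add: scaleC_zero0)
    next
      case False
      define u where "u = scaleR (1 / norm x) x"
      have nu: "norm u = 1" using False unfolding u_def by simp
      have "x = scaleR (norm x) u" using False unfolding u_def by simp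
      then have xe: "x = scaleC (complex_of_real (norm x)) u" by (simp add: scaleR_scaleC)
      have "fval t (scaleC (complex_of_real (norm x)) u) (scaleC (complex_of_real (norm x)) u)
          = complex_of_real (norm x) * (complex_of_real (norm x) * fval t u u)"
        by (simp only: L complex_cnj_complex_of_real mult.left_commute)
      then have "fval t x x = complex_of_real ((norm x)^2) * fval t u u"
        using xe by (simp add: power2_eq_square)
      then have "Re (fval t x x) = (norm x)^2 * Re (fval t u u)" by simp
      also have "\<dots> \<le> (norm x)^2 * max M 0" using M[OF nu] by (intro mult_left_mono) auto
      finally show ?thesis by (simp add: mult.commute)
    qed
  qed
  then show ?thesis by (intro exI[of _ "max M 0"]) auto
qed

 
lemma quad_diff_bound: assumes t: "t \<in> Vf" and U: "fdom t = UNIV" and M0: "0 \<le> M"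
  and M: "\<And>x. Re (fval t x x) \<le> M * (norm x)^2"
  shows "\<bar>Re (fval t (u + h) (u + h)) - Re (fval t u u)\<bar> \<le> 2*M*norm u*norm h + M*(norm h)^2"
proof -
  define S where "S = Re (fval t u h + fval t h u)"
  define P where "P = Re (fval t u u)"
  define Q where "Q = Re (fval t h h)"
  have P0: "0 \<le> P" "0 \<le> Q" unfolding P_def Q_def using Vf_Re_nonneg[OF t] by auto
  have "0 \<le> P + r*S + r^2*Q" for r
  proof -
    have "0 \<le> Re (fval t (u + scaleR r h) (u + scaleR r h))" by (rule Vf_Re_nonneg[OF t])
    then show ?thesis unfolding Vf_UNIV_expand(2)[OF t U, where u=u and h=h] P_def Q_def S_def .
  qed
  then have "S^2 \<le> 4*P*Q" using disc P0 by blast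
  also have "\<dots> \<le> 4*(M*(norm u)^2)*(M*(norm h)^2)"
  proof -
    have "P * Q \<le> (M*(norm u)^2)*(M*(norm h)^2)"
      using P0 M[of u] M[of h] unfolding P_def Q_def by (intro mult_mono) auto
    then show ?thesis by simp
  qed
  also have "\<dots> = (2*M*norm u*norm h)^2" by (simp add: power2_eq_square)
  finally have S2: "\<bar>S\<bar>^2 \<le> (2*M*norm u*norm h)^2" by simp
  have "\<bar>S\<bar> \<le> 2*M*norm u*norm h"
    by (rule power2_le_imp_le[OF S2]) (use M0 in simp)
  moreover have "Re (fval t (u + h) (u + h)) - Re (fval t u u) = S + Q"
    using Vf_UNIV_expand(1)[OF t U, where u=u and h=h] unfolding S_def Q_def P_def by simp
  moreover have "Q \<le> M*(norm h)^2" using M unfolding Q_def by simp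
  ultimately show ?thesis using P0 by linarith
qed

 
lemma quad_cont: assumes NT: "\<exists>x::'a::chilbert_space. x \<noteq> 0" and t: "t \<in> Vf" and B: "form_bounded (t::'a sform)"
  and X: "X \<longlonglongrightarrow> x"
  shows "(\<lambda>n. Re (fval t (X n) (X n))) \<longlonglongrightarrow> Re (fval t x x)"
proof -
  have U: "fdom t = UNIV" using VfD(4)[OF t B] .
  obtain M where M0: "0 \<le> M" and M: "\<And>x. Re (fval t x x) \<le> M * (norm x)^2"
    using bounded_quad[OF NT t B] by blast
  have "(\<lambda>n. x - X n) \<longlonglongrightarrow> x - x" by (intro tendsto_intros X)
  then have h0: "(\<lambda>n. norm (x - X n)) \<longlonglongrightarrow> 0" using tendsto_norm_zero by force
  have "(\<lambda>n. 2*M*norm (X n)*norm (x - X n) + M*(norm (x - X n))^2) \<longlonglongrightarrow> 2*M*norm x*0 + M*0^2"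
    by (intro tendsto_intros X h0)
  then have g: "(\<lambda>n. 2*M*norm (X n)*norm (x - X n) + M*(norm (x - X n))^2) \<longlonglongrightarrow> 0" by simp
  have "\<forall>n. norm (Re (fval t (X n) (X n)) - Re (fval t x x)) \<le> 2*M*norm (X n)*norm (x - X n) + M*(norm (x - X n))^2"
  proof
    fix n
    have "\<bar>Re (fval t (X n + (x - X n)) (X n + (x - X n))) - Re (fval t (X n) (X n))\<bar> \<le> 2*M*norm (X n)*norm (x - X n) + M*(norm (x - X n))^2"
      by (rule quad_diff_bound[OF t U M0 M])
    then show "norm (Re (fval t (X n) (X n)) - Re (fval t x x)) \<le> 2*M*norm (X n)*norm (x - X n) + M*(norm (x - X n))^2"
      by simp
  qed
  then have "(\<lambda>n. Re (fval t (X n) (X n)) - Re (fval t x x)) \<longlonglongrightarrow> 0"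
    by (intro Lim_null_comparison[OF _ g]) (simp add: always_eventually)
  then show ?thesis by (rule LIM_zero_cancel)
qed

lemma bounded_agree: assumes NT: "\<exists>x::'a::chilbert_space. x \<noteq> 0"
  and b: "b \<in> Vf" and c: "c \<in> Vf" and Bb: "form_bounded (b::'a sform)" and Bc: "form_bounded c"
  and D: "closure D = UNIV" and agree: "\<And>x. x \<in> D \<Longrightarrow> fval b x x = fval c x x"
  shows "b = c"
proof -
  have Ub: "fdom b = UNIV" using VfD(4)[OF b Bb] .
  have Uc: "fdom c = UNIV" using VfD(4)[OF c Bc] .
  have diag: "fval b x x = fval c x x" for x
  proof -
    have "x \<in> closure D" using D by simp
    then obtain X where XD: "\<And>n. X n \<in> D" and X: "X \<longlonglongrightarrow> x" unfolding closure_sequential by blast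
    have 1: "(\<lambda>n. Re (fval b (X n) (X n))) \<longlonglongrightarrow> Re (fval b x x)" by (rule quad_cont[OF NT b Bb X])
    have 2: "(\<lambda>n. Re (fval b (X n) (X n))) \<longlonglongrightarrow> Re (fval c x x)"
      using quad_cont[OF NT c Bc X] agree[OF XD] by simp
    have "Re (fval b x x) = Re (fval c x x)" using LIMSEQ_unique[OF 1 2] .
    then show ?thesis using Vf_Im[OF b, of x] Vf_Im[OF c, of x] by (simp add: complex_eq_iff)
  qed
  note Lb = VfD_lin[OF b, unfolded Ub, simplified]
  note Lc = VfD_lin[OF c, unfolded Uc, simplified]
  have "fval b x y - fval c x y = 0" for x y
  proof (rule polar[where f = "\<lambda>x y. fval b x y - fval c x y" and D = UNIV])
    show "csubspace (UNIV::'a set)" unfolding csubspace_def by simp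
  qed (simp_all add: Lb Lc diag algebra_simps)
  then have "fval b = fval c" by (intro ext) simp
  then show ?thesis using Ub Uc by (intro form_eqI) auto
qed

 
lemma sum_comm: "form_sum t s = form_sum s t"
  unfolding form_sum_def by (auto simp: fun_eq_iff add.commute)

lemma sum_assoc: "form_sum (form_sum a b) c = form_sum a (form_sum b c)"
  by (rule form_eqI) (auto simp: fval_sum fun_eq_iff add.assoc)

lemma oplus_comm: "form_oplus a b = form_oplus b a"
  unfolding form_oplus_def by (auto simp: sum_comm)

lemma sum_zero: "t \<in> Vf \<Longrightarrow> form_sum t zero_form = t"
  by (rule form_eqI) (auto simp: fval_sum fun_eq_iff zero_form_def dest: VfD(3))

lemma bsum_sub: assumes b: "b \<in> Vf" and c: "c \<in> Vf" and B: "form_bounded (form_sum b c)"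
  and sub: "fdom c \<subseteq> fdom b"
  shows "form_bounded c"
proof -
  obtain M where M: "\<And>x. x \<in> fdom b \<inter> fdom c \<Longrightarrow> norm x = 1 \<Longrightarrow> Re (fval (form_sum b c) x x) \<le> M"
    using B unfolding form_bounded_def by auto
  have "Re (fval c x x) \<le> M" if "x \<in> fdom c" "norm x = 1" for x
  proof -
    have "x \<in> fdom b \<inter> fdom c" using that sub by auto
    then have "Re (fval b x x) + Re (fval c x x) \<le> M" using M[of x] that by (simp add: fval_sum)
    then show ?thesis using Vf_Re_nonneg[OF b, of x] by linarith
  qed
  then show ?thesis unfolding form_bounded_def by blast
qed

lemma bsum_both: assumes b: "b \<in> Vf" and c: "c \<in> Vf" and Bb: "form_bounded b" and Bc: "form_bounded c"
  shows "form_bounded (form_sum b c)"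
proof -
  obtain M1 where M1: "\<And>x. x \<in> fdom b \<Longrightarrow> norm x = 1 \<Longrightarrow> Re (fval b x x) \<le> M1"
    using Bb unfolding form_bounded_def by auto
  obtain M2 where M2: "\<And>x. x \<in> fdom c \<Longrightarrow> norm x = 1 \<Longrightarrow> Re (fval c x x) \<le> M2"
    using Bc unfolding form_bounded_def by auto
  have "Re (fval (form_sum b c) x x) \<le> M1 + M2" if "x \<in> fdom (form_sum b c)" "norm x = 1" for x
    using that M1[of x] M2[of x] by (auto simp: fval_sum)
  then show ?thesis unfolding form_bounded_def by blast
qed

lemma bsum_iff: assumes b: "b \<in> Vf" and c: "c \<in> Vf"
  and d: "form_bounded b \<or> form_bounded c \<or> fdom b = fdom c"
  shows "form_bounded (form_sum b c) \<longleftrightarrow> form_bounded b \<and> form_bounded c"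
proof
  assume B: "form_bounded (form_sum b c)"
  have B': "form_bounded (form_sum c b)" using B by (simp add: sum_comm)
  from d show "form_bounded b \<and> form_bounded c"
  proof (elim disjE)
    assume Bb: "form_bounded b"
    then have "fdom c \<subseteq> fdom b" using VfD(4)[OF b] by auto
    then show ?thesis using bsum_sub[OF b c B] Bb by auto
  next
    assume Bc: "form_bounded c"
    then have "fdom b \<subseteq> fdom c" using VfD(4)[OF c] by auto
    then show ?thesis using bsum_sub[OF c b B'] Bc by auto
  next
    assume "fdom b = fdom c"
    then show ?thesis using bsum_sub[OF b c B] bsum_sub[OF c b B'] by auto
  qed
next
  assume "form_bounded b \<and> form_bounded c"
  then show "form_bounded (form_sum b c)" using bsum_both[OF b c] by auto
qed

lemma sum_Vf: assumes b: "b \<in> Vf" and c: "c \<in> Vf"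
  and d: "form_bounded b \<or> form_bounded c \<or> fdom b = fdom c"
  shows "form_sum b c \<in> Vf"
proof -
  let ?s = "form_sum b c"
  have sb: "csubspace (fdom b)" and sc: "csubspace (fdom c)" using VfD(1)[OF b] VfD(1)[OF c] by auto
  have ss: "csubspace (fdom ?s)" using sb sc unfolding csubspace_def by auto
  have dom: "fdom ?s = fdom b \<or> fdom ?s = fdom c"
    using d VfD(4)[OF b] VfD(4)[OF c] by auto
  have cl: "closure (fdom ?s) = UNIV" using dom VfD(2)[OF b] VfD(2)[OF c] by auto
  have van: "\<forall>x y. \<not> (x \<in> fdom ?s \<and> y \<in> fdom ?s) \<longrightarrow> fval ?s x y = 0"
    by (auto simp: fval_sum)
  note Lb = VfD_lin[OF b] and Lc = VfD_lin[OF c]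
  have add: "\<forall>x\<in>fdom ?s. \<forall>y\<in>fdom ?s. \<forall>z\<in>fdom ?s.
          fval ?s (x + y) z = fval ?s x z + fval ?s y z
        \<and> fval ?s z (x + y) = fval ?s z x + fval ?s z y"
  proof (intro ballI conjI)
    fix x y z assume xyz: "x \<in> fdom ?s" "y \<in> fdom ?s" "z \<in> fdom ?s"
    then have "x + y \<in> fdom ?s" using ss unfolding csubspace_def by blast
    then show "fval ?s (x + y) z = fval ?s x z + fval ?s y z" "fval ?s z (x + y) = fval ?s z x + fval ?s z y"
      using xyz by (auto simp: fval_sum Lb Lc)
  qed
  have sca: "\<forall>c'. \<forall>x\<in>fdom ?s. \<forall>y\<in>fdom ?s.
          fval ?s (scaleC c' x) y = c' * fval ?s x y
        \<and> fval ?s x (scaleC c' y) = cnj c' * fval ?s x y"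
  proof (intro allI ballI conjI)
    fix c' x y assume xy: "x \<in> fdom ?s" "y \<in> fdom ?s"
    then have "scaleC c' x \<in> fdom ?s" "scaleC c' y \<in> fdom ?s" using ss unfolding csubspace_def by blast+
    then show "fval ?s (scaleC c' x) y = c' * fval ?s x y" "fval ?s x (scaleC c' y) = cnj c' * fval ?s x y"
      using xy by (auto simp: fval_sum Lb Lc algebra_simps)
  qed
  have pos: "form_positive ?s" unfolding form_positive_def
    using VfD(5,6)[OF b] VfD(5,6)[OF c] by (auto simp: fval_sum)
  have bd: "form_bounded ?s \<longrightarrow> fdom ?s = UNIV"
    using bsum_iff[OF b c d] VfD(4)[OF b] VfD(4)[OF c] by auto
  show ?thesis unfolding Vf_def is_form_def using ss cl van add sca pos bd by blast
qed

 
lemma sum_norm_ineqs: assumes NT: "\<exists>x::'a::chilbert_space. x \<noteq> 0"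
  and b: "b \<in> Vf" and c: "c \<in> Vf" and s: "form_sum b c \<in> Vf"
  and v: "v \<in> fdom b" "v \<in> fdom (c::'a sform)"
  shows "form_norm b v \<le> sqrt (1 + form_m b) * form_norm (form_sum b c) v"
    and "form_norm (form_sum b c) v \<le> sqrt (1 + form_m (form_sum b c)) * (form_norm b v + form_norm c v)"
proof -
  define P where "P = Re (fval b v v)"
  define Q where "Q = Re (fval c v v)"
  define N where "N = (norm v)^2"
  define mb where "mb = form_m b"
  define mc where "mc = form_m c"
  define ms where "ms = form_m (form_sum b c)"
  have nn: "0 \<le> P" "0 \<le> Q" "0 \<le> N" "0 \<le> mb" "0 \<le> mc" "0 \<le> ms"
    unfolding P_def Q_def N_def mb_def mc_def ms_def
    using Vf_Re_nonneg[OF b] Vf_Re_nonneg[OF c] form_m_nonneg[OF NT b] form_m_nonneg[OF NT c]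
      form_m_nonneg[OF NT s] by auto
  have fs: "Re (fval (form_sum b c) v v) = P + Q" unfolding P_def Q_def using v by (simp add: fval_sum)
  have eb: "form_norm b v = sqrt (P + (1 + mb) * N)" unfolding form_norm_eq P_def mb_def N_def ..
  have ec: "form_norm c v = sqrt (Q + (1 + mc) * N)" unfolding form_norm_eq Q_def mc_def N_def ..
  have es: "form_norm (form_sum b c) v = sqrt (P + Q + (1 + ms) * N)" unfolding form_norm_eq fs ms_def N_def ..
  have p1: "0 \<le> mb*P" "0 \<le> mb*Q" "0 \<le> ms*N" "0 \<le> mb*(ms*N)" "0 \<le> ms*P" "0 \<le> ms*Q"
     "0 \<le> ms*(mb*N)" "0 \<le> ms*(mc*N)" "0 \<le> mb*N" "0 \<le> mc*N"
    using nn by auto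
  have "(1+mb)*(P+Q+(1+ms)*N) = P + (1+mb)*N + (mb*P + Q + mb*Q + ms*N + mb*(ms*N))"
    by (simp add: algebra_simps)
  then have "P + (1 + mb) * N \<le> (1+mb)*(P+Q+(1+ms)*N)" using p1 nn by linarith
  then have "sqrt (P + (1 + mb) * N) \<le> sqrt ((1+mb)*(P+Q+(1+ms)*N))" by (rule real_sqrt_le_mono)
  then show "form_norm b v \<le> sqrt (1 + form_m b) * form_norm (form_sum b c) v"
    unfolding eb es mb_def[symmetric] by (simp add: real_sqrt_mult)
  have "(1+ms)*((P + (1 + mb) * N) + (Q + (1 + mc) * N)) = P + Q + (1+ms)*N + (ms*P + ms*Q + mb*N + ms*(mb*N) + N + mc*N + ms*(mc*N) + ms*N)"
    by (simp add: algebra_simps)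
  then have "P + Q + (1+ms)*N \<le> (1+ms)*((P + (1 + mb) * N) + (Q + (1 + mc) * N))" using p1 nn by linarith
  then have "sqrt (P + Q + (1+ms)*N) \<le> sqrt ((1+ms)*((P + (1 + mb) * N) + (Q + (1 + mc) * N)))"
    by (rule real_sqrt_le_mono)
  also have "\<dots> = sqrt (1+ms) * sqrt ((P + (1 + mb) * N) + (Q + (1 + mc) * N))" by (simp add: real_sqrt_mult)
  also have "\<dots> \<le> sqrt (1+ms) * (sqrt (P + (1 + mb) * N) + sqrt (Q + (1 + mc) * N))"
    using nn by (intro mult_left_mono sqrt_add_le_add_sqrt) auto
  finally show "form_norm (form_sum b c) v \<le> sqrt (1 + form_m (form_sum b c)) * (form_norm b v + form_norm c v)"
    unfolding eb ec es ms_def[symmetric] .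
qed

 
lemma sum_closed: assumes NT: "\<exists>x::'a::chilbert_space. x \<noteq> 0"
  and b: "b \<in> Vf" and c: "c \<in> Vf" and s: "form_sum b c \<in> Vf"
  and Cb: "form_closed b" and Cc: "form_closed (c::'a sform)"
  shows "form_closed (form_sum b c)"
  unfolding form_closed_def
proof (intro allI impI, elim conjE)
  let ?s = "form_sum b c"
  have s': "form_sum c b \<in> Vf" using s by (simp add: sum_comm)
  fix X :: "nat \<Rightarrow> 'a"
  assume XD: "\<forall>n. X n \<in> fdom ?s" and CS: "\<forall>e>0. \<exists>N. \<forall>m\<ge>N. \<forall>n\<ge>N. form_norm ?s (X m - X n) < e"
  have ssub: "csubspace (fdom ?s)" using VfD(1)[OF s] .
  have dif: "X m - X n \<in> fdom b" "X m - X n \<in> fdom c" for m n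
    using csub_diff[OF ssub, of "X m" "X n"] XD by auto
  define Kb where "Kb = sqrt (1 + form_m b)"
  define Kc where "Kc = sqrt (1 + form_m c)"
  define Ks where "Ks = sqrt (1 + form_m ?s)"
  have K: "Kb > 0" "Kc > 0" "Ks > 0" unfolding Kb_def Kc_def Ks_def
    using form_m_nonneg[OF NT b] form_m_nonneg[OF NT c] form_m_nonneg[OF NT s] by auto
  have I1: "form_norm b v \<le> Kb * form_norm ?s v" if "v \<in> fdom b" "v \<in> fdom c" for v
    using sum_norm_ineqs(1)[OF NT b c s that] unfolding Kb_def .
  have I2: "form_norm c v \<le> Kc * form_norm ?s v" if "v \<in> fdom b" "v \<in> fdom c" for v
    using sum_norm_ineqs(1)[OF NT c b s' that(2,1)] unfolding Kc_def by (simp add: sum_comm)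
  have I4: "form_norm ?s v \<le> Ks * (form_norm b v + form_norm c v)" if "v \<in> fdom b" "v \<in> fdom c" for v
    using sum_norm_ineqs(2)[OF NT b c s that] unfolding Ks_def .
  have CSb: "\<forall>e>0. \<exists>N. \<forall>m\<ge>N. \<forall>n\<ge>N. form_norm b (X m - X n) < e"
  proof (intro allI impI)
    fix e :: real assume e: "e > 0"
    obtain N where N: "\<And>m n. m \<ge> N \<Longrightarrow> n \<ge> N \<Longrightarrow> form_norm ?s (X m - X n) < e / Kb"
      using CS e K by (meson divide_pos_pos)
    have "form_norm b (X m - X n) < e" if "m \<ge> N" "n \<ge> N" for m n
    proof -
      have "form_norm b (X m - X n) \<le> Kb * form_norm ?s (X m - X n)" using I1 dif by blast
      also have "\<dots> < Kb * (e / Kb)" using N[OF that] K by (intro mult_strict_left_mono) auto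
      finally show ?thesis using K by simp
    qed
    then show "\<exists>N. \<forall>m\<ge>N. \<forall>n\<ge>N. form_norm b (X m - X n) < e" by blast
  qed
  have CSc: "\<forall>e>0. \<exists>N. \<forall>m\<ge>N. \<forall>n\<ge>N. form_norm c (X m - X n) < e"
  proof (intro allI impI)
    fix e :: real assume e: "e > 0"
    obtain N where N: "\<And>m n. m \<ge> N \<Longrightarrow> n \<ge> N \<Longrightarrow> form_norm ?s (X m - X n) < e / Kc"
      using CS e K by (meson divide_pos_pos)
    have "form_norm c (X m - X n) < e" if "m \<ge> N" "n \<ge> N" for m n
    proof -
      have "form_norm c (X m - X n) \<le> Kc * form_norm ?s (X m - X n)" using I2 dif by blast
      also have "\<dots> < Kc * (e / Kc)" using N[OF that] K by (intro mult_strict_left_mono) auto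
      finally show ?thesis using K by simp
    qed
    then show "\<exists>N. \<forall>m\<ge>N. \<forall>n\<ge>N. form_norm c (X m - X n) < e" by blast
  qed
  have XDb: "\<forall>n. X n \<in> fdom b" and XDc: "\<forall>n. X n \<in> fdom c" using XD by auto
  obtain xb where xb: "xb \<in> fdom b" and cb: "\<forall>e>0. \<exists>N. \<forall>n\<ge>N. form_norm b (X n - xb) < e"
    using Cb XDb CSb unfolding form_closed_def by blast
  obtain xc where xc: "xc \<in> fdom c" and cc: "\<forall>e>0. \<exists>N. \<forall>n\<ge>N. form_norm c (X n - xc) < e"
    using Cc XDc CSc unfolding form_closed_def by blast
  have "X \<longlonglongrightarrow> xb" unfolding LIMSEQ_iff
    using cb form_norm_ge[OF NT b] by (meson le_less_trans)
  moreover have "X \<longlonglongrightarrow> xc" unfolding LIMSEQ_iff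
    using cc form_norm_ge[OF NT c] by (meson le_less_trans)
  ultimately have eq: "xb = xc" by (rule LIMSEQ_unique)
  have xs: "xb \<in> fdom ?s" using xb xc eq by simp
  have "\<forall>e>0. \<exists>N. \<forall>n\<ge>N. form_norm ?s (X n - xb) < e"
  proof (intro allI impI)
    fix e :: real assume e: "e > 0"
    have e': "e / (2 * Ks) > 0" using e K by simp
    obtain N1 where N1: "\<And>n. n \<ge> N1 \<Longrightarrow> form_norm b (X n - xb) < e / (2 * Ks)" using cb e' by blast
    obtain N2 where N2: "\<And>n. n \<ge> N2 \<Longrightarrow> form_norm c (X n - xb) < e / (2 * Ks)" using cc e' eq by blast
    have "form_norm ?s (X n - xb) < e" if "n \<ge> max N1 N2" for n
    proof -
      have v: "X n - xb \<in> fdom b" "X n - xb \<in> fdom c" using csub_diff[OF ssub, of "X n" xb] XD xs by auto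
      have "form_norm ?s (X n - xb) \<le> Ks * (form_norm b (X n - xb) + form_norm c (X n - xb))" using I4[OF v] .
      also have "\<dots> < Ks * (e / (2 * Ks) + e / (2 * Ks))"
        using N1[of n] N2[of n] that K by (intro mult_strict_left_mono) auto
      also have "\<dots> = e" using K by (simp add: field_simps)
      finally show ?thesis .
    qed
    then show "\<exists>N. \<forall>n\<ge>N. form_norm ?s (X n - xb) < e" by blast
  qed
  then show "\<exists>x\<in>fdom ?s. \<forall>e>0. \<exists>N. \<forall>n\<ge>N. form_norm ?s (X n - x) < e" using xs by blast
qed

 
lemma zero_Vf: "(zero_form::'a::chilbert_space sform) \<in> Vf"
  unfolding Vf_def is_form_def form_positive_def zero_form_def csubspace_def by simp

lemma zero_Cf: assumes NT: "\<exists>x::'a::chilbert_space. x \<noteq> 0"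
  shows "(zero_form::'a sform) \<in> Cf"
proof -
  have m: "form_m (zero_form::'a sform) = 0"
  proof -
    obtain u::'a where "u \<in> fdom zero_form" "norm u = 1" using unit_in_dom[OF NT zero_Vf] by blast
    then have "{Re (fval (zero_form::'a sform) x x) |x. x \<in> fdom zero_form \<and> norm x = 1} = {0}"
      unfolding zero_form_def by auto
    then show ?thesis unfolding form_m_def by simp
  qed
  have fn: "form_norm (zero_form::'a sform) v = norm v" for v
    unfolding form_norm_eq m by (simp add: zero_form_def)
  have "form_closed (zero_form::'a sform)" unfolding form_closed_def fn
  proof (intro allI impI, elim conjE)
    fix X :: "nat \<Rightarrow> 'a"
    assume "\<forall>e>0. \<exists>N. \<forall>m\<ge>N. \<forall>n\<ge>N. norm (X m - X n) < e"
    then have "Cauchy X" unfolding Cauchy_iff .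
    then obtain L where "X \<longlonglongrightarrow> L" using Cauchy_convergent unfolding convergent_def by blast
    then show "\<exists>x\<in>fdom zero_form. \<forall>e>0. \<exists>N. \<forall>n\<ge>N. norm (X n - x) < e"
      unfolding LIMSEQ_iff zero_form_def by auto
  qed
  then show ?thesis unfolding Cf_def using zero_Vf by simp
qed

lemma restrict_Some: "restrict_oplus Q a b = Some r \<longleftrightarrow>
   (form_bounded a \<or> form_bounded b \<or> fdom a = fdom b) \<and> r = form_sum a b \<and> r \<in> Q"
  unfolding restrict_oplus_def form_oplus_def by auto

lemma restrict_comm: "restrict_oplus Q a b = restrict_oplus Q b a"
  unfolding restrict_oplus_def by (simp add: oplus_comm)

lemma CfD: "t \<in> Cf \<Longrightarrow> t \<in> Vf" "t \<in> Cf \<Longrightarrow> form_closed t"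
  unfolding Cf_def by auto

lemma sum_Cf: assumes NT: "\<exists>x::'a::chilbert_space. x \<noteq> 0"
  and b: "b \<in> Cf" and c: "(c::'a sform) \<in> Cf"
  and d: "form_bounded b \<or> form_bounded c \<or> fdom b = fdom c"
  shows "form_sum b c \<in> Cf"
proof -
  have "form_sum b c \<in> Vf" using sum_Vf[OF CfD(1)[OF b] CfD(1)[OF c] d] .
  then show ?thesis using sum_closed[OF NT CfD(1)[OF b] CfD(1)[OF c] _ CfD(2)[OF b] CfD(2)[OF c]]
    unfolding Cf_def by blast
qed

lemma assoc_dir: assumes NT: "\<exists>x::'a::chilbert_space. x \<noteq> 0"
  and a: "a \<in> Cf" and b: "b \<in> Cf" and c: "(c::'a sform) \<in> Cf"
  and h1: "restrict_oplus Cf a b = Some d" and h2: "restrict_oplus Cf d c = Some e"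
  shows "restrict_oplus Cf b c = Some (form_sum b c) \<and> restrict_oplus Cf a (form_sum b c) = Some e"
proof -
  have aV: "a \<in> Vf" and bV: "b \<in> Vf" and cV: "c \<in> Vf" using a b c by (auto dest: CfD)
  have H1: "form_bounded a \<or> form_bounded b \<or> fdom a = fdom b" and dd: "d = form_sum a b" and dC: "d \<in> Cf"
    using h1 unfolding restrict_Some by auto
  have H2: "form_bounded d \<or> form_bounded c \<or> fdom d = fdom c" and ee: "e = form_sum d c" and eC: "e \<in> Cf"
    using h2 unfolding restrict_Some by auto
  have Bd: "form_bounded d \<longleftrightarrow> form_bounded a \<and> form_bounded b" using bsum_iff[OF aV bV H1] dd by simp
  have Ua: "form_bounded a \<Longrightarrow> fdom a = UNIV" using VfD(4)[OF aV] .
  have Ub: "form_bounded b \<Longrightarrow> fdom b = UNIV" using VfD(4)[OF bV] .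
  have Uc: "form_bounded c \<Longrightarrow> fdom c = UNIV" using VfD(4)[OF cV] .
  have domd: "fdom d = fdom a \<inter> fdom b" using dd by simp
  have G1: "form_bounded b \<or> form_bounded c \<or> fdom b = fdom c"
    using H1 H2 Bd Ua domd by auto
  have Bbc: "form_bounded (form_sum b c) \<longleftrightarrow> form_bounded b \<and> form_bounded c" using bsum_iff[OF bV cV G1] .
  have G2: "form_bounded a \<or> form_bounded (form_sum b c) \<or> fdom a = fdom (form_sum b c)"
    using H1 H2 Bd Ub Uc domd Bbc by auto
  have bcC: "form_sum b c \<in> Cf" using sum_Cf[OF NT b c G1] .
  have "form_sum a (form_sum b c) = e" using ee dd by (simp add: sum_assoc)
  then show ?thesis using G1 G2 bcC eC unfolding restrict_Some by auto
qed

 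
lemma agree_eq: assumes b: "b \<in> Vf" and c: "c \<in> Vf" and dom: "fdom b = fdom c"
  and ag: "\<And>x y. x \<in> fdom b \<Longrightarrow> y \<in> fdom b \<Longrightarrow> fval b x y = fval c x y"
  shows "b = c"
proof (rule form_eqI[OF dom])
  show "fval b = fval c"
  proof (intro ext)
    fix x y
    show "fval b x y = fval c x y"
      using ag[of x y] VfD(3)[OF b, of x y] VfD(3)[OF c, of x y] dom by (cases "x \<in> fdom b \<and> y \<in> fdom b") auto
  qed
qed

lemma cancel: assumes NT: "\<exists>x::'a::chilbert_space. x \<noteq> 0"
  and a: "a \<in> Cf" and b: "b \<in> Cf" and c: "(c::'a sform) \<in> Cf"
  and h1: "restrict_oplus Cf a b = Some r" and h2: "restrict_oplus Cf a c = Some r"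
  shows "b = c"
proof -
  have aV: "a \<in> Vf" and bV: "b \<in> Vf" and cV: "c \<in> Vf" using a b c by (auto dest: CfD)
  have H1: "form_bounded a \<or> form_bounded b \<or> fdom a = fdom b" and H2: "form_bounded a \<or> form_bounded c \<or> fdom a = fdom c"
   and eq: "form_sum a b = form_sum a c" using h1 h2 unfolding restrict_Some by auto
  have dom: "fdom a \<inter> fdom b = fdom a \<inter> fdom c" using arg_cong[OF eq, of fdom] by simp
  have ag: "fval b x y = fval c x y" if "x \<in> fdom a \<inter> fdom b" "y \<in> fdom a \<inter> fdom b" for x y
  proof -
    have "fval (form_sum a b) x y = fval (form_sum a c) x y" using eq by simp
    then show ?thesis using that dom by (simp add: fval_sum)
  qed
  have Ua: "form_bounded a \<Longrightarrow> fdom a = UNIV" using VfD(4)[OF aV] .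
  have Ub: "form_bounded b \<Longrightarrow> fdom b = UNIV" using VfD(4)[OF bV] .
  have Uc: "form_bounded c \<Longrightarrow> fdom c = UNIV" using VfD(4)[OF cV] .
  show ?thesis
  proof (cases "form_bounded a")
    case True
    then show ?thesis using Ua dom ag by (intro agree_eq[OF bV cV]) auto
  next
    case nA: False
    show ?thesis
    proof (cases "fdom a = fdom b")
      case ab: True
      show ?thesis
      proof (cases "fdom a = fdom c")
        case True
        then show ?thesis using ab dom ag by (intro agree_eq[OF bV cV]) auto
      next
        case False
        then have Bc: "form_bounded c" using H2 nA by auto
        have dc: "fdom c = UNIV" using Uc[OF Bc] .
        have "form_bounded b"
        proof -
          obtain M where M: "\<And>x. x \<in> fdom c \<Longrightarrow> norm x = 1 \<Longrightarrow> Re (fval c x x) \<le> M"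
            using Bc unfolding form_bounded_def by auto
          have "Re (fval b x x) \<le> M" if "x \<in> fdom b" "norm x = 1" for x
            using M[of x] ag[of x x] that ab dc by auto
          then show ?thesis unfolding form_bounded_def by blast
        qed
        then have "fdom b = UNIV" using Ub by simp
        then show ?thesis using dc ab dom ag by (intro agree_eq[OF bV cV]) auto
      qed
    next
      case nab: False
      then have Bb: "form_bounded b" using H1 nA by auto
      have db: "fdom b = UNIV" using Ub[OF Bb] .
      show ?thesis
      proof (cases "fdom a = fdom c")
        case ac: True
        have "form_bounded c"
        proof -
          obtain M where M: "\<And>x. x \<in> fdom b \<Longrightarrow> norm x = 1 \<Longrightarrow> Re (fval b x x) \<le> M"
            using Bb unfolding form_bounded_def by auto
          have "Re (fval c x x) \<le> M" if "x \<in> fdom c" "norm x = 1" for x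
            using M[of x] ag[of x x] that ac db by auto
          then show ?thesis unfolding form_bounded_def by blast
        qed
        then have "fdom c = UNIV" using Uc by simp
        then show ?thesis using db ac nab by simp
      next
        case False
        then have Bc: "form_bounded c" using H2 nA by auto
        have dc: "fdom c = UNIV" using Uc[OF Bc] .
        show ?thesis
        proof (rule bounded_agree[OF NT bV cV Bb Bc])
          show "closure (fdom a) = UNIV" using VfD(2)[OF aV] .
          show "\<And>x. x \<in> fdom a \<Longrightarrow> fval b x x = fval c x x" using ag db by auto
        qed
      qed
    qed
  qed
qed

lemma zero_sum: assumes a: "a \<in> Cf" and b: "(b::'a::chilbert_space sform) \<in> Cf"
  and h: "restrict_oplus Cf a b = Some zero_form"
  shows "a = zero_form"
proof -
  have aV: "a \<in> Vf" and bV: "b \<in> Vf" using a b by (auto dest: CfD)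
  have eq: "form_sum a b = zero_form" using h unfolding restrict_Some by auto
  have dom: "fdom a \<inter> fdom b = UNIV" using arg_cong[OF eq, of fdom] by (simp add: zero_form_def)
  then have da: "fdom a = UNIV" and db: "fdom b = UNIV" by auto
  have s0: "fval a x y + fval b x y = 0" for x y
  proof -
    have "fval (form_sum a b) x y = 0" using eq by (simp add: zero_form_def)
    then show ?thesis using dom by (simp add: fval_sum)
  qed
  have diag: "fval a x x = 0" for x
  proof -
    have "Re (fval a x x) + Re (fval b x x) = 0" using s0[of x x] by (metis plus_complex.sel(1) zero_complex.sel(1))
    then have "Re (fval a x x) = 0" using Vf_Re_nonneg[OF aV, of x] Vf_Re_nonneg[OF bV, of x] by linarith
    then show ?thesis using Vf_Im[OF aV, of x] by (simp add: complex_eq_iff)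
  qed
  note La = VfD_lin[OF aV, unfolded da, simplified]
  have "fval a x y = 0" for x y
  proof (rule polar[where f = "fval a" and D = UNIV])
    show "csubspace (UNIV::'a set)" unfolding csubspace_def by simp
  qed (simp_all add: La diag)
  then show ?thesis using da by (intro form_eqI) (auto simp: zero_form_def fun_eq_iff)
qed

theorem theorem4p15:
  assumes "infinite_dimensional TYPE('a::chilbert_space)"
  shows "generalized_effect_algebra (Cf :: 'a sform set) (restrict_oplus Cf) zero_form"
proof -
  have NT: "\<exists>x::'a. x \<noteq> 0" using nontriv[OF assms] .
  have assoc: "Option.bind (restrict_oplus Cf a b) (\<lambda>d. restrict_oplus Cf d c) =
               Option.bind (restrict_oplus Cf b c) (\<lambda>d. restrict_oplus Cf a d)"
    if a: "a \<in> Cf" and b: "b \<in> Cf" and c: "(c::'a sform) \<in> Cf" for a b c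
  proof -
    have "Option.bind (restrict_oplus Cf a b) (\<lambda>d. restrict_oplus Cf d c) = Some e \<longleftrightarrow>
          Option.bind (restrict_oplus Cf b c) (\<lambda>d. restrict_oplus Cf a d) = Some e" for e
    proof
      assume "Option.bind (restrict_oplus Cf a b) (\<lambda>d. restrict_oplus Cf d c) = Some e"
      then obtain d where h1: "restrict_oplus Cf a b = Some d" and h2: "restrict_oplus Cf d c = Some e"
        by (cases "restrict_oplus Cf a b") auto
      show "Option.bind (restrict_oplus Cf b c) (\<lambda>d. restrict_oplus Cf a d) = Some e"
        using assoc_dir[OF NT a b c h1 h2] by simp
    next
      assume "Option.bind (restrict_oplus Cf b c) (\<lambda>d. restrict_oplus Cf a d) = Some e"
      then obtain d where h1: "restrict_oplus Cf b c = Some d" and h2: "restrict_oplus Cf a d = Some e"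
        by (cases "restrict_oplus Cf b c") auto
      have h1': "restrict_oplus Cf c b = Some d" and h2': "restrict_oplus Cf d a = Some e"
        using h1 h2 restrict_comm by metis+
      from assoc_dir[OF NT c b a h1' h2'] have
        "restrict_oplus Cf b a = Some (form_sum b a)" "restrict_oplus Cf c (form_sum b a) = Some e" by auto
      then have "restrict_oplus Cf a b = Some (form_sum b a)" "restrict_oplus Cf (form_sum b a) c = Some e"
        using restrict_comm by metis+
      then show "Option.bind (restrict_oplus Cf a b) (\<lambda>d. restrict_oplus Cf d c) = Some e" by simp
    qed
    then show ?thesis by (metis option.exhaust)
  qed
  show ?thesis unfolding generalized_effect_algebra_def
  proof (intro conjI ballI allI impI)
    show "zero_form \<in> (Cf::'a sform set)" using zero_Cf[OF NT] .
  next
    fix a b c :: "'a sform" assume "a \<in> Cf" "b \<in> Cf" "restrict_oplus Cf a b = Some c"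
    then show "c \<in> Cf" unfolding restrict_Some by auto
  next
    fix a b :: "'a sform" show "restrict_oplus Cf a b = restrict_oplus Cf b a" by (rule restrict_comm)
  next
    fix a b c :: "'a sform" assume "a \<in> Cf" "b \<in> Cf" "c \<in> Cf"
    then show "Option.bind (restrict_oplus Cf a b) (\<lambda>d. restrict_oplus Cf d c) =
               Option.bind (restrict_oplus Cf b c) (restrict_oplus Cf a)" using assoc by blast
  next
    fix a :: "'a sform" assume a: "a \<in> Cf"
    have "form_bounded (zero_form::'a sform)" unfolding form_bounded_def zero_form_def by auto
    then show "restrict_oplus Cf a zero_form = Some a" unfolding restrict_Some
      using sum_zero[OF CfD(1)[OF a]] a by auto
  next
    fix a b c :: "'a sform" assume abc: "a \<in> Cf" "b \<in> Cf" "c \<in> Cf"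
      and h: "restrict_oplus Cf a b \<noteq> None \<and> restrict_oplus Cf a b = restrict_oplus Cf a c"
    obtain r where r1: "restrict_oplus Cf a b = Some r" using h by (metis option.exhaust)
    have r2: "restrict_oplus Cf a c = Some r" using h r1 by simp
    show "b = c" using cancel[OF NT abc r1 r2] .
  next
    fix a b :: "'a sform" assume ab: "a \<in> Cf" "b \<in> Cf" and h: "restrict_oplus Cf a b = Some zero_form"
    show "a = zero_form" using zero_sum[OF ab h] .
  next
    fix a b :: "'a sform" assume ab: "a \<in> Cf" "b \<in> Cf" and h: "restrict_oplus Cf a b = Some zero_form"
    then have "restrict_oplus Cf b a = Some zero_form" using restrict_comm by metis
    then show "b = zero_form" using zero_sum[OF ab(2,1)] by blast
  qed
qed

end
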